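(* Let $\mu$ be a locally finite positive Borel measure on $\mathbb{R}$ and let $I$ be a dyadic interval with left and right halves $I_{\mathrm{left}},I_{\mathrm{right}}$. For an interval $J$ let \[ \boldsymbol{M}_{J}=\begin{bmatrix}\int_J d\mu&\int_J x\,d\mu\\ \int_J x\,d\mu&\int_J x^2d\mu\end{bmatrix}. \] (1) If $\mu(I_{\mathrm{left}})>0$ and $\mu(I_{\mathrm{right}})>0$, and $\boldsymbol{M}_{I_{\mathrm{left}}}$ is positive definite while $\det\boldsymbol{M}_{I_{\mathrm{right}}}=0$, then $L_{I;2}^{2}(\mu)$ is one-dimensional (so there is exactly one nonzero Alpert function $a_I^{\mu,1}=a_I^{\mu,2}\neq0$ up to sign); the same conclusion holds when the roles of $I_{\mathrm{left}}$ and $I_{\mathrm{right}}$ are interchanged. (2) In all other cases in which at least one of $\boldsymbol{M}_{I_{\mathrm{left}}}$, $\boldsymbol{M}_{I_{\mathrm{right}}}$ fails to be positive definite, $L_{I;2}^{2}(\mu)=\{0\}$ in $L^2(\mu)$ (i.e. $a_I^{\mu,1}=a_I^{\mu,2}=0$).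
   Context: $L_{I;2}^{2}(\mu)$ is the subspace of $L^{2}(\mu)$ of functions $f=(\alpha_1x+\alpha_0)\mathbf{1}_{I_{\mathrm{left}}}+(\beta_1x+\beta_0)\mathbf{1}_{I_{\mathrm{right}}}$ with real coefficients such that $\int f\,d\mu=\int f(x)x\,d\mu(x)=0$. The Alpert functions $a_I^{\mu,1},a_I^{\mu,2}$ are an orthonormal (in $L^2(\mu)$) family spanning $L^2_{I;2}(\mu)$, with vanishing functions discarded. *)

theory Defs
  imports "HOL-Analysis.Analysis"
begin

definition loc_finite_borel :: "real measure \<Rightarrow> bool" where
  "loc_finite_borel M \<longleftrightarrow> sets M = sets borel \<and> (\<forall>a b. emeasure M {a..b} < \<infinity>)"

definition dyadic_left :: "int \<Rightarrow> int \<Rightarrow> real set" where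
  "dyadic_left j k = {of_int k * 2 powr of_int j ..< (of_int k + 1/2) * 2 powr of_int j}"

definition dyadic_right :: "int \<Rightarrow> int \<Rightarrow> real set" where
  "dyadic_right j k = {(of_int k + 1/2) * 2 powr of_int j ..< (of_int k + 1) * 2 powr of_int j}"

definition moment_matrix :: "real measure \<Rightarrow> real set \<Rightarrow> real^2^2" where
  "moment_matrix M J =
     vector [vector [(LINT x:J|M. 1), (LINT x:J|M. x)],
             vector [(LINT x:J|M. x), (LINT x:J|M. x^2)]]"

definition pos_def_mat :: "real^2^2 \<Rightarrow> bool" where
  "pos_def_mat A \<longleftrightarrow> (\<forall>v. v \<noteq> 0 \<longrightarrow> v \<bullet> (A *v v) > 0)"

text \<open>The space L^2_{I;2}(mu), as a set of representatives (functions real => real).\<close>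
definition L2_I2 :: "real measure \<Rightarrow> real set \<Rightarrow> real set \<Rightarrow> (real \<Rightarrow> real) set" where
  "L2_I2 M Il Ir = {f. (\<exists>\<alpha>1 \<alpha>0 \<beta>1 \<beta>0.
       f = (\<lambda>x. indicator Il x * (\<alpha>1 * x + \<alpha>0) + indicator Ir x * (\<beta>1 * x + \<beta>0)))
     \<and> (\<integral>x. f x \<partial>M) = 0 \<and> (\<integral>x. f x * x \<partial>M) = 0}"

end

theory Submission
  imports Defs
begin
definition mom :: "real measure \<Rightarrow> real set \<Rightarrow> nat \<Rightarrow> real" where
  "mom M J k = (\<integral>x. indicator J x  *  x^k \<partial>M)"

lemma mm_entries:
  "moment_matrix M J = vector [vector [mom M J 0, mom M J 1], vector [mom M J 1, mom M J 2]]"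
  unfolding moment_matrix_def mom_def set_lebesgue_integral_def by simp

lemma det_mm: "det (moment_matrix M J) = mom M J 0  *  mom M J 2 - mom M J 1  *  mom M J 1"
  unfolding mm_entries by (simp add: det_2)

lemma pd_mm: "pos_def_mat (moment_matrix M J) \<longleftrightarrow>
   (\<forall>v0 v1. (v0 \<noteq> 0 \<or> v1 \<noteq> 0) \<longrightarrow>
      v0 * v0 * mom M J 0 + (v0 * v1+v1 * v0) * mom M J 1 + v1 * v1 * mom M J 2 > 0)"
proof -
  have e: "v \<bullet> (moment_matrix M J *v v) = v$1 * v$1 * mom M J 0 + (v$1 * v$2+v$2 * v$1) * mom M J 1 + v$2 * v$2 * mom M J 2" for v :: "real^2"
    unfolding mm_entries by (simp add: inner_vec_def matrix_vector_mult_def sum_2 algebra_simps)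
  have z: "(v = 0) \<longleftrightarrow> v$1 = 0 \<and> v$2 = 0" for v :: "real^2"
    by (simp add: vec_eq_iff forall_2)
  show ?thesis
    unfolding pos_def_mat_def
  proof (intro iffI allI impI)
    fix v0 v1 :: real
    assume H: "\<forall>v. v \<noteq> 0 \<longrightarrow> 0 < v \<bullet> (moment_matrix M J *v v)" and "v0 \<noteq> 0 \<or> v1 \<noteq> 0"
    then have "(vector [v0, v1] :: real^2) \<noteq> 0" by (auto simp: z)
    from H[rule_format, OF this] show "v0 * v0 * mom M J 0 + (v0 * v1+v1 * v0) * mom M J 1 + v1 * v1 * mom M J 2 > 0"
      by (simp add: e)
  next
    fix v :: "real^2"
    assume H: "\<forall>v0 v1. (v0 \<noteq> 0 \<or> v1 \<noteq> 0) \<longrightarrow>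
      v0 * v0 * mom M J 0 + (v0 * v1+v1 * v0) * mom M J 1 + v1 * v1 * mom M J 2 > 0" and "v \<noteq> 0"
    then show "0 < v \<bullet> (moment_matrix M J *v v)" by (auto simp: e z)
  qed
qed

lemma int_J:
  assumes Mb: "sets M = sets borel" and J: "J \<in> sets M" "emeasure M J < \<infinity>" "J \<subseteq> {lo..hi}"
  shows "integrable M (\<lambda>x. indicator J x * x^k :: real)"
proof (rule integrableI_bounded_set[where A=J and B="(\<bar>lo\<bar>+\<bar>hi\<bar>)^k"])
  have mb: "borel_measurable M = borel_measurable borel" using measurable_cong_sets[OF Mb refl] .
  show "J \<in> sets M" by fact
  show "emeasure M J < \<infinity>" by fact
  show "(\<lambda>x. indicator J x * x^k) \<in> borel_measurable M"
    unfolding mb using J(1) Mb by measurable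
  show "AE x in M. x \<in> J \<longrightarrow> norm (indicator J x * x ^ k) \<le> (\<bar>lo\<bar> + \<bar>hi\<bar>) ^ k"
  proof (rule AE_I2, intro impI)
    fix x assume "x \<in> J"
    then have "lo \<le> x" "x \<le> hi" using J(3) by auto
    then have "\<bar>x\<bar> \<le> \<bar>lo\<bar> + \<bar>hi\<bar>" by arith
    then have "\<bar>x\<bar>^k \<le> (\<bar>lo\<bar> + \<bar>hi\<bar>)^k" by (rule power_mono) simp
    then show "norm (indicator J x * x ^ k) \<le> (\<bar>lo\<bar> + \<bar>hi\<bar>) ^ k" using \<open>x \<in> J\<close> by (simp add: power_abs)
  qed
  show "AE x in M. x \<notin> J \<longrightarrow> indicator J x * x ^ k = 0" by simp
qed

lemma poly_fun: "indicator J x * ((p1*x+p0)*(q1*x+q0)) =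
   (p0*q0) * (indicator J x * x^0) + (p0*q1+p1*q0) * (indicator J x * x^1) + (p1*q1) * (indicator J x * x^2 :: real)"
  by (cases "x \<in> J") (simp_all add: power2_eq_square algebra_simps)

lemma poly_int:
  assumes "\<And>k. integrable M (\<lambda>x. indicator J x * x^k :: real)"
  shows "integrable M (\<lambda>x. indicator J x * ((p1*x+p0)*(q1*x+q0)))"
    and "(\<integral>x. indicator J x * ((p1*x+p0)*(q1*x+q0)) \<partial>M) =
          p0*q0*mom M J 0 + (p0*q1+p1*q0)*mom M J 1 + p1*q1*mom M J 2"
proof -
  have i: "integrable M (\<lambda>x. c * (indicator J x * x^k))" for c k
    by (rule integrable_mult_right[OF assms])
  show "integrable M (\<lambda>x. indicator J x * ((p1*x+p0)*(q1*x+q0)))"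
    unfolding poly_fun by (intro Bochner_Integration.integrable_add i)
  show "(\<integral>x. indicator J x * ((p1*x+p0)*(q1*x+q0)) \<partial>M) =
          p0*q0*mom M J 0 + (p0*q1+p1*q0)*mom M J 1 + p1*q1*mom M J 2"
    unfolding poly_fun mom_def
    by (subst Bochner_Integration.integral_add, intro Bochner_Integration.integrable_add i, rule i, subst Bochner_Integration.integral_add, (rule i)+,
        simp only: integral_mult_right_zero)
qed

definition Q :: "real measure \<Rightarrow> real set \<Rightarrow> real \<Rightarrow> real \<Rightarrow> real" where
  "Q M J a1 a0 = a0*a0*mom M J 0 + (a0*a1+a1*a0)*mom M J 1 + a1*a1*mom M J 2"

lemma Q_nonneg:
  assumes "\<And>k. integrable M (\<lambda>x. indicator J x * x^k :: real)"
  shows "Q M J a1 a0 \<ge> 0"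
proof -
  have "0 \<le> (\<integral>x. indicator J x * ((a1*x+a0)*(a1*x+a0)) \<partial>M)"
    by (rule integral_nonneg_AE) auto
  then show ?thesis using poly_int(2)[OF assms] by (simp add: Q_def)
qed

definition F :: "real set \<Rightarrow> real set \<Rightarrow> real \<Rightarrow> real \<Rightarrow> real \<Rightarrow> real \<Rightarrow> real \<Rightarrow> real" where
  "F Il Ir a1 a0 b1 b0 = (\<lambda>x. indicator Il x * (a1 * x + a0) + indicator Ir x * (b1 * x + b0))"

context
  fixes M Il Ir
  assumes iL: "\<And>k. integrable M (\<lambda>x. indicator Il x * x^k :: real)"
      and iR: "\<And>k. integrable M (\<lambda>x. indicator Ir x * x^k :: real)"
      and dj: "Il \<inter> Ir = {}"
begin

lemma F_int0: "(\<integral>x. F Il Ir a1 a0 b1 b0 x \<partial>M) =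
   a0*mom M Il 0 + a1*mom M Il 1 + b0*mom M Ir 0 + b1*mom M Ir 1"
proof -
  have "F Il Ir a1 a0 b1 b0 = (\<lambda>x. indicator Il x * ((a1*x+a0)*(0*x+1)) + indicator Ir x * ((b1*x+b0)*(0*x+1)))"
    by (simp add: F_def)
  then have "(\<integral>x. F Il Ir a1 a0 b1 b0 x \<partial>M) = (\<integral>x. indicator Il x * ((a1*x+a0)*(0*x+1)) + indicator Ir x * ((b1*x+b0)*(0*x+1)) \<partial>M)"
    by simp
  also have "\<dots> = (\<integral>x. indicator Il x * ((a1*x+a0)*(0*x+1)) \<partial>M) + (\<integral>x. indicator Ir x * ((b1*x+b0)*(0*x+1)) \<partial>M)"
    by (rule Bochner_Integration.integral_add[OF poly_int(1)[OF iL] poly_int(1)[OF iR]])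
  also have "\<dots> = a0*mom M Il 0 + a1*mom M Il 1 + b0*mom M Ir 0 + b1*mom M Ir 1"
    by (simp only: poly_int(2)[OF iL] poly_int(2)[OF iR]) (simp add: algebra_simps)
  finally show ?thesis .
qed

lemma F_int1: "(\<integral>x. F Il Ir a1 a0 b1 b0 x * x \<partial>M) =
   a0*mom M Il 1 + a1*mom M Il 2 + b0*mom M Ir 1 + b1*mom M Ir 2"
proof -
  have "(\<lambda>x. F Il Ir a1 a0 b1 b0 x * x) = (\<lambda>x. indicator Il x * ((a1*x+a0)*(1*x+0)) + indicator Ir x * ((b1*x+b0)*(1*x+0)))"
    by (simp add: F_def fun_eq_iff algebra_simps)
  then have "(\<integral>x. F Il Ir a1 a0 b1 b0 x * x \<partial>M) = (\<integral>x. indicator Il x * ((a1*x+a0)*(1*x+0)) + indicator Ir x * ((b1*x+b0)*(1*x+0)) \<partial>M)"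
    by simp
  also have "\<dots> = (\<integral>x. indicator Il x * ((a1*x+a0)*(1*x+0)) \<partial>M) + (\<integral>x. indicator Ir x * ((b1*x+b0)*(1*x+0)) \<partial>M)"
    by (rule Bochner_Integration.integral_add[OF poly_int(1)[OF iL] poly_int(1)[OF iR]])
  also have "\<dots> = a0*mom M Il 1 + a1*mom M Il 2 + b0*mom M Ir 1 + b1*mom M Ir 2"
    by (simp only: poly_int(2)[OF iL] poly_int(2)[OF iR]) (simp add: algebra_simps)
  finally show ?thesis .
qed

lemma F_AE: "(AE x in M. F Il Ir a1 a0 b1 b0 x = 0) \<longleftrightarrow> Q M Il a1 a0 + Q M Ir b1 b0 = 0"
proof -
  have sq: "(\<lambda>x. (F Il Ir a1 a0 b1 b0 x)^2) = (\<lambda>x. indicator Il x * ((a1*x+a0)*(a1*x+a0)) + indicator Ir x * ((b1*x+b0)*(b1*x+b0)))"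
  proof
    fix x show "(F Il Ir a1 a0 b1 b0 x)^2 = indicator Il x * ((a1*x+a0)*(a1*x+a0)) + indicator Ir x * ((b1*x+b0)*(b1*x+b0))"
      using dj by (cases "x \<in> Il"; cases "x \<in> Ir") (auto simp: F_def power2_eq_square)
  qed
  have int: "integrable M (\<lambda>x. (F Il Ir a1 a0 b1 b0 x)^2)" unfolding sq
    by (rule Bochner_Integration.integrable_add[OF poly_int(1)[OF iL] poly_int(1)[OF iR]])
  have "(AE x in M. F Il Ir a1 a0 b1 b0 x = 0) \<longleftrightarrow> (AE x in M. (F Il Ir a1 a0 b1 b0 x)^2 = 0)"
    by simp
  also have "\<dots> \<longleftrightarrow> (\<integral>x. (F Il Ir a1 a0 b1 b0 x)^2 \<partial>M) = 0"
    using integral_nonneg_eq_0_iff_AE[OF int] by simp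
  also have "(\<integral>x. (F Il Ir a1 a0 b1 b0 x)^2 \<partial>M) = Q M Il a1 a0 + Q M Ir b1 b0"
    unfolding sq
    by (simp only: Bochner_Integration.integral_add[OF poly_int(1)[OF iL] poly_int(1)[OF iR]]
        poly_int(2)[OF iL] poly_int(2)[OF iR] Q_def)
  finally show ?thesis .
qed

end

lemma conc:
  assumes ints: "\<And>k. integrable M (\<lambda>x. indicator J x * x^k :: real)"
    and sp: "space M = UNIV" and J: "J \<in> sets M" and pos: "mom M J 0 > 0"
    and det: "mom M J 0 * mom M J 2 = mom M J 1 * mom M J 1" and ne: "emeasure M J \<noteq> 0"
  shows "mom M J 1 / mom M J 0 \<in> J"
proof (rule ccontr)
  define c where "c = mom M J 1 / mom M J 0"
  assume nc: "mom M J 1 / mom M J 0 \<notin> J"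
  have i: "integrable M (\<lambda>x. indicator J x * ((1*x+(-c))*(1*x+(-c))))" by (rule poly_int(1)[OF ints])
  have "(\<integral>x. indicator J x * ((1*x+(-c))*(1*x+(-c))) \<partial>M) = c*c*mom M J 0 - 2*c*mom M J 1 + mom M J 2"
    by (simp only: poly_int(2)[OF ints]) (simp add: algebra_simps)
  also have "\<dots> = 0" using pos det unfolding c_def by (simp add: field_simps)
  finally have "AE x in M. indicator J x * ((1*x+(-c))*(1*x+(-c))) = 0"
    using integral_nonneg_eq_0_iff_AE[OF i] by (simp add: AE_I2)
  then have "AE x in M. \<not> (x \<in> J)"
    by eventually_elim (use nc c_def in \<open>auto split: split_indicator\<close>)
  from emeasure_eq_0_AE[OF this] have "emeasure M J = 0" using sp by simp
  with ne show False by simp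
qed


definition Qf :: "real \<Rightarrow> real \<Rightarrow> real \<Rightarrow> real \<Rightarrow> real \<Rightarrow> real" where
  "Qf m0 m1 m2 a1 a0 = a0*a0*m0 + (a0*a1+a1*a0)*m1 + a1*a1*m2"

lemma Q_Qf: "Q M J a1 a0 = Qf (mom M J 0) (mom M J 1) (mom M J 2) a1 a0"
  by (simp add: Q_def Qf_def)

lemma Qf_id: "m0 * Qf m0 m1 m2 a1 a0 = (m0*a0 + m1*a1)^2 + (m0*m2 - m1*m1)*a1^2"
  by (simp add: Qf_def power2_eq_square algebra_simps)

lemma alg_det_nn:
  assumes "\<And>a1 a0. Qf m0 m1 m2 a1 a0 \<ge> 0" "m0 > 0"
  shows "m0*m2 - m1*m1 \<ge> 0"
proof -
  have "Qf m0 m1 m2 m0 (-m1) = m0 * (m0*m2 - m1*m1)" by (simp add: Qf_def algebra_simps)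
  with assms(1)[of m0 "-m1"] assms(2) show ?thesis by (simp add: zero_le_mult_iff)
qed

lemma alg_pd_iff:
  assumes psd: "\<And>a1 a0. Qf m0 m1 m2 a1 a0 \<ge> 0" and m0: "m0 > 0"
  shows "(\<forall>v0 v1. (v0 \<noteq> 0 \<or> v1 \<noteq> 0) \<longrightarrow> Qf m0 m1 m2 v1 v0 > 0) \<longleftrightarrow> m0*m2 - m1*m1 \<noteq> 0"
proof
  assume H: "\<forall>v0 v1. (v0 \<noteq> 0 \<or> v1 \<noteq> 0) \<longrightarrow> Qf m0 m1 m2 v1 v0 > 0"
  have "Qf m0 m1 m2 m0 (-m1) = m0 * (m0*m2 - m1*m1)" by (simp add: Qf_def algebra_simps)
  moreover have "Qf m0 m1 m2 m0 (-m1) > 0" using H m0 by auto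
  ultimately show "m0*m2 - m1*m1 \<noteq> 0" by auto
next
  assume d: "m0*m2 - m1*m1 \<noteq> 0"
  with alg_det_nn[OF psd m0] have d': "m0*m2 - m1*m1 > 0" by simp
  show "\<forall>v0 v1. (v0 \<noteq> 0 \<or> v1 \<noteq> 0) \<longrightarrow> Qf m0 m1 m2 v1 v0 > 0"
  proof (intro allI impI)
    fix v0 v1 :: real assume nz: "v0 \<noteq> 0 \<or> v1 \<noteq> 0"
    have "m0 * Qf m0 m1 m2 v1 v0 > 0"
    proof (cases "v1 = 0")
      case True
      then show ?thesis unfolding Qf_id using nz m0 by simp
    next
      case False
      then have "(m0*m2 - m1*m1) * v1^2 > 0" using d' by simp
      then show ?thesis unfolding Qf_id by (smt (verit) zero_le_power2)
    qed
    then show "Qf m0 m1 m2 v1 v0 > 0" using m0 by (simp add: zero_less_mult_iff)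
  qed
qed

lemma alg_z2:
  assumes m0: "m0 > 0" and n0: "n0 > 0" and dA: "m0*m2 = m1*m1" and dB: "n0*n2 = n1*n1"
    and cd: "m1*n0 \<noteq> n1*m0"
    and e0: "a0*m0 + a1*m1 + b0*n0 + b1*n1 = 0"
    and e1: "a0*m1 + a1*m2 + b0*n1 + b1*n2 = 0"
  shows "Qf m0 m1 m2 a1 a0 = 0 \<and> Qf n0 n1 n2 b1 b0 = 0"
proof -
  define S where "S = m0*a0 + m1*a1"
  define T where "T = n0*b0 + n1*b1"
  have ST: "S + T = 0" using e0 by (simp add: S_def T_def algebra_simps)
  have "m0*n0*(a0*m1 + a1*m2 + b0*n1 + b1*n2) = n0*m1*S + m0*n1*T + n0*a1*(m0*m2 - m1*m1) + m0*b1*(n0*n2-n1*n1)"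
    by (simp add: S_def T_def algebra_simps)
  then have h: "n0*m1*S + m0*n1*T = 0" using e1 dA dB by simp
  have Tm: "T = -S" using ST by linarith
  have "n0*m1*S - m0*n1*S = 0" using h unfolding Tm by simp
  then have "S * (n0*m1 - m0*n1) = 0" by (simp add: algebra_simps)
  moreover have "n0*m1 - m0*n1 \<noteq> 0" using cd by (simp add: algebra_simps)
  ultimately have S0: "S = 0" by simp
  then have T0: "T = 0" using ST by simp
  have "m0 * Qf m0 m1 m2 a1 a0 = 0" unfolding Qf_id using S0 dA by (simp add: S_def)
  moreover have "n0 * Qf n0 n1 n2 b1 b0 = 0" unfolding Qf_id using T0 dB by (simp add: T_def)
  ultimately show ?thesis using m0 n0 by simp
qed


lemma L2_sym: "L2_I2 M A B = L2_I2 M B A"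
  unfolding L2_I2_def
  by (auto simp: add.commute)

lemma mom_null:
  assumes "J \<in> sets M" "emeasure M J = 0"
  shows "mom M J k = 0"
proof -
  have "AE x in M. x \<notin> J" using assms by (intro AE_not_in) (simp add: null_sets_def)
  then have "AE x in M. indicator J x * x^k = (0::real)" by eventually_elim simp
  then show ?thesis unfolding mom_def by (rule integral_eq_zero_AE)
qed

lemma mom0_pos:
  assumes "J \<in> sets M" "space M = UNIV" "emeasure M J < \<infinity>" "emeasure M J > 0"
  shows "mom M J 0 > 0"
proof -
  have "mom M J 0 = measure M J" using assms(1,2) by (simp add: mom_def)
  moreover have "emeasure M J = ennreal (measure M J)" using assms(3) by (simp add: emeasure_eq_ennreal_measure)
  ultimately show ?thesis using assms(4) by (simp add: ennreal_less_zero_iff)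
qed

context
  fixes M Il Ir
  assumes iL: "\<And>k. integrable M (\<lambda>x. indicator Il x * x^k :: real)"
      and iR: "\<And>k. integrable M (\<lambda>x. indicator Ir x * x^k :: real)"
      and dj: "Il \<inter> Ir = {}"
      and sp: "space M = UNIV" and sL: "Il \<in> sets M" and sR: "Ir \<in> sets M"
      and fL: "emeasure M Il < \<infinity>" and fR: "emeasure M Ir < \<infinity>"
begin

lemma L2_char: "f \<in> L2_I2 M Il Ir \<longleftrightarrow> (\<exists>a1 a0 b1 b0. f = F Il Ir a1 a0 b1 b0 \<and>
   a0*mom M Il 0 + a1*mom M Il 1 + b0*mom M Ir 0 + b1*mom M Ir 1 = 0 \<and>
   a0*mom M Il 1 + a1*mom M Il 2 + b0*mom M Ir 1 + b1*mom M Ir 2 = 0)"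
  unfolding L2_I2_def F_def[symmetric]
  using F_int0[OF iL iR dj] F_int1[OF iL iR dj] by (auto; blast)

lemma F_AE': "(AE x in M. F Il Ir a1 a0 b1 b0 x = 0) \<longleftrightarrow>
  Qf (mom M Il 0) (mom M Il 1) (mom M Il 2) a1 a0 = 0 \<and> Qf (mom M Ir 0) (mom M Ir 1) (mom M Ir 2) b1 b0 = 0"
  using F_AE[OF iL iR dj] Q_nonneg[OF iL, of a1 a0] Q_nonneg[OF iR, of b1 b0] by (simp add: Q_Qf add_nonneg_eq_0_iff)

lemma psdL: "Qf (mom M Il 0) (mom M Il 1) (mom M Il 2) a1 a0 \<ge> 0"
  using Q_nonneg[OF iL] by (simp add: Q_Qf)
lemma psdR: "Qf (mom M Ir 0) (mom M Ir 1) (mom M Ir 2) a1 a0 \<ge> 0"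
  using Q_nonneg[OF iR] by (simp add: Q_Qf)

lemma zero1:
  assumes "emeasure M Il = 0" "f \<in> L2_I2 M Il Ir"
  shows "AE x in M. f x = 0"
proof -
  have z: "mom M Il k = 0" for k using mom_null[OF sL assms(1)] .
  obtain a1 a0 b1 b0 where f: "f = F Il Ir a1 a0 b1 b0" and
    e0: "b0*mom M Ir 0 + b1*mom M Ir 1 = 0" and e1: "b0*mom M Ir 1 + b1*mom M Ir 2 = 0"
    using assms(2) unfolding L2_char by (auto simp: z)
  have "Qf (mom M Ir 0) (mom M Ir 1) (mom M Ir 2) b1 b0 = b0*(b0*mom M Ir 0 + b1*mom M Ir 1) + b1*(b0*mom M Ir 1 + b1*mom M Ir 2)"
    by (simp add: Qf_def algebra_simps)
  then show ?thesis unfolding f F_AE' using e0 e1 by (simp add: z Qf_def)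
qed

lemma conc_side:
  assumes "emeasure M J > 0" "J \<in> {Il, Ir}"
    and "det (moment_matrix M J) = 0"
  shows "mom M J 1 / mom M J 0 \<in> J"
proof -
  have ints: "\<And>k. integrable M (\<lambda>x. indicator J x * x^k :: real)" using assms(2) iL iR by auto
  have "J \<in> sets M" "emeasure M J < \<infinity>" using assms(2) sL sR fL fR by auto
  then have "mom M J 0 > 0" using mom0_pos sp assms(1) by blast
  then show ?thesis using conc[OF ints sp \<open>J \<in> sets M\<close>] assms(1,3) by (simp add: det_mm)
qed

lemma zero2:
  assumes pL: "emeasure M Il > 0" and pR: "emeasure M Ir > 0"
    and dL: "det (moment_matrix M Il) = 0" and dR: "det (moment_matrix M Ir) = 0"
    and "f \<in> L2_I2 M Il Ir"
  shows "AE x in M. f x = 0"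
proof -
  have m0: "mom M Il 0 > 0" using mom0_pos[OF sL sp fL pL] .
  have n0: "mom M Ir 0 > 0" using mom0_pos[OF sR sp fR pR] .
  have cL: "mom M Il 1 / mom M Il 0 \<in> Il" using conc_side[OF pL _ dL] by simp
  have cR: "mom M Ir 1 / mom M Ir 0 \<in> Ir" using conc_side[OF pR _ dR] by simp
  have "mom M Il 1 / mom M Il 0 \<noteq> mom M Ir 1 / mom M Ir 0" using cL cR dj by auto
  then have cd: "mom M Il 1 * mom M Ir 0 \<noteq> mom M Ir 1 * mom M Il 0" using m0 n0
    by (simp add: field_simps)
  obtain a1 a0 b1 b0 where f: "f = F Il Ir a1 a0 b1 b0" and
    e0: "a0*mom M Il 0 + a1*mom M Il 1 + b0*mom M Ir 0 + b1*mom M Ir 1 = 0" and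
    e1: "a0*mom M Il 1 + a1*mom M Il 2 + b0*mom M Ir 1 + b1*mom M Ir 2 = 0"
    using assms(5) unfolding L2_char by auto
  show ?thesis unfolding f F_AE'
    by (rule alg_z2[OF m0 n0 _ _ cd e0 e1]) (use dL dR in \<open>simp_all add: det_mm\<close>)
qed


lemma pd_Qf: "pos_def_mat (moment_matrix M J) \<longleftrightarrow>
   (\<forall>v0 v1. (v0 \<noteq> 0 \<or> v1 \<noteq> 0) \<longrightarrow> Qf (mom M J 0) (mom M J 1) (mom M J 2) v1 v0 > 0)"
  unfolding pd_mm Qf_def ..

lemma pd_iff_det:
  assumes "emeasure M Il > 0"
  shows "pos_def_mat (moment_matrix M Il) \<longleftrightarrow> det (moment_matrix M Il) \<noteq> 0"
  unfolding pd_Qf det_mm using alg_pd_iff[OF psdL mom0_pos[OF sL sp fL assms]] by simp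

lemma part1:
  assumes pdL: "pos_def_mat (moment_matrix M Il)" and dR: "det (moment_matrix M Ir) = 0"
    and pR: "emeasure M Ir > 0"
  shows "\<exists>f\<in>L2_I2 M Il Ir. \<not> (AE x in M. f x = 0) \<and>
            (\<forall>g\<in>L2_I2 M Il Ir. \<exists>c::real. AE x in M. g x = c * f x)"
proof -
  define m0 where "m0 = mom M Il 0"
  define m1 where "m1 = mom M Il 1"
  define m2 where "m2 = mom M Il 2"
  define n0 where "n0 = mom M Ir 0"
  define n1 where "n1 = mom M Ir 1"
  define n2 where "n2 = mom M Ir 2"
  have pd: "\<forall>v0 v1. (v0 \<noteq> 0 \<or> v1 \<noteq> 0) \<longrightarrow> Qf m0 m1 m2 v1 v0 > 0"
    using pdL unfolding pd_Qf m0_def m1_def m2_def .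
  have m0p: "m0 > 0" using pd[rule_format, of 1 0] by (simp add: Qf_def)
  have Dn: "m0*m2 - m1*m1 \<noteq> 0"
    using alg_pd_iff[OF psdL, folded m0_def m1_def m2_def, OF m0p] pd by simp
  have n0p: "n0 > 0" unfolding n0_def using mom0_pos[OF sR sp fR pR] .
  have dB: "n0*n2 = n1*n1" using dR by (simp add: det_mm n0_def n1_def n2_def)
  define D where "D = m0*m2 - m1*m1"
  define a0 where "a0 = (n1*m1 - n0*m2)/D"
  define a1 where "a1 = (n0*m1 - n1*m0)/D"
  have Dn': "D \<noteq> 0" using Dn by (simp add: D_def)
  have "a0*m0 + a1*m1 = ((n1*m1 - n0*m2)*m0 + (n0*m1 - n1*m0)*m1)/D"
    unfolding a0_def a1_def by (simp add: add_divide_distrib)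
  also have "\<dots> = (-n0) * D / D" unfolding D_def by (simp add: algebra_simps)
  also have "\<dots> = -n0" using Dn' by simp
  finally have ea0: "a0*m0 + a1*m1 + n0 = 0" by simp
  have "a0*m1 + a1*m2 = ((n1*m1 - n0*m2)*m1 + (n0*m1 - n1*m0)*m2)/D"
    unfolding a0_def a1_def by (simp add: add_divide_distrib)
  also have "\<dots> = (-n1) * D / D" unfolding D_def by (simp add: algebra_simps)
  also have "\<dots> = -n1" using Dn' by simp
  finally have ea1: "a0*m1 + a1*m2 + n1 = 0" by simp
  define f where "f = F Il Ir a1 a0 0 1"
  have fL2: "f \<in> L2_I2 M Il Ir" unfolding L2_char f_def
    using ea0 ea1 by (intro exI[of _ a1] exI[of _ a0] exI[of _ 0] exI[of _ 1])
      (simp add: m0_def m1_def m2_def n0_def n1_def n2_def)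
  have fnz: "\<not> (AE x in M. f x = 0)" unfolding f_def F_AE'
    using n0p by (simp add: Qf_def n0_def)
  have "\<exists>c::real. AE x in M. g x = c * f x" if g: "g \<in> L2_I2 M Il Ir" for g
  proof -
    obtain c1 c0 d1 d0 where gF: "g = F Il Ir c1 c0 d1 d0" and
      ec0: "c0*m0 + c1*m1 + d0*n0 + d1*n1 = 0" and
      ec1: "c0*m1 + c1*m2 + d0*n1 + d1*n2 = 0"
      using g unfolding L2_char m0_def m1_def m2_def n0_def n1_def n2_def by blast
    define s where "s = d0 + n1/n0*d1"
    define u0 where "u0 = c0 - s*a0"
    define u1 where "u1 = c1 - s*a1"
    have L0: "u0*m0 + u1*m1 = 0"
    proof -
      have "u0*m0 + u1*m1 = (c0*m0 + c1*m1) - s*(a0*m0 + a1*m1)"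
        unfolding u0_def u1_def by (simp add: algebra_simps)
      also have "\<dots> = -(d0*n0 + d1*n1) + s*n0" 
      proof -
        have "c0*m0+c1*m1 = -(d0*n0+d1*n1)" using ec0 by linarith
        moreover have "a0*m0 + a1*m1 = -n0" using ea0 by linarith
        ultimately show ?thesis by simp
      qed
      also have "\<dots> = 0" using n0p unfolding s_def by (simp add: field_simps)
      finally show ?thesis .
    qed
    have L1: "u0*m1 + u1*m2 = 0"
    proof -
      have "u0*m1 + u1*m2 = (c0*m1 + c1*m2) - s*(a0*m1 + a1*m2)"
        unfolding u0_def u1_def by (simp add: algebra_simps)
      also have "\<dots> = -(d0*n1 + d1*n2) + s*n1" 
      proof -
        have "c0*m1+c1*m2 = -(d0*n1+d1*n2)" using ec1 by linarith
        moreover have "a0*m1 + a1*m2 = -n1" using ea1 by linarith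
        ultimately show ?thesis by simp
      qed
      also have "\<dots> = d1*(n1*n1 - n0*n2)/n0" using n0p unfolding s_def by (simp add: field_simps)
      also have "\<dots> = 0" using dB by simp
      finally show ?thesis .
    qed
    have QL: "Qf m0 m1 m2 u1 u0 = 0"
    proof -
      have "Qf m0 m1 m2 u1 u0 = u0*(u0*m0 + u1*m1) + u1*(u0*m1 + u1*m2)"
        by (simp add: Qf_def algebra_simps)
      then show ?thesis using L0 L1 by simp
    qed
    have QR: "Qf n0 n1 n2 d1 (d0 - s) = 0"
    proof -
      have "n0*(d0 - s) + n1*d1 = 0" using n0p unfolding s_def by (simp add: field_simps)
      then have "n0 * Qf n0 n1 n2 d1 (d0 - s) = 0" unfolding Qf_id using dB by simp
      then show ?thesis using n0p by simp
    qed
    have "AE x in M. F Il Ir u1 u0 d1 (d0 - s) x = 0"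
      unfolding F_AE' using QL QR by (simp add: m0_def m1_def m2_def n0_def n1_def n2_def)
    then have "AE x in M. g x = s * f x"
    proof (rule eventually_mono)
      fix x assume "F Il Ir u1 u0 d1 (d0 - s) x = 0"
      moreover have "F Il Ir u1 u0 d1 (d0 - s) x = g x - s * f x"
        unfolding gF f_def F_def u0_def u1_def by (simp add: algebra_simps)
      ultimately show "g x = s * f x" by simp
    qed
    then show ?thesis by blast
  qed
  then show ?thesis using fL2 fnz by blast
qed

end

theorem lemma2:
  fixes M :: "real measure" and j k :: int
  assumes "loc_finite_borel M"
  defines "Il \<equiv> dyadic_left j k" and "Ir \<equiv> dyadic_right j k"
  shows
   "(emeasure M Il > 0 \<and> emeasure M Ir > 0 \<and>
      ((pos_def_mat (moment_matrix M Il) \<and> det (moment_matrix M Ir) = 0) \<or>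
       (pos_def_mat (moment_matrix M Ir) \<and> det (moment_matrix M Il) = 0))
     \<longrightarrow> (\<exists>f\<in>L2_I2 M Il Ir. \<not> (AE x in M. f x = 0) \<and>
            (\<forall>g\<in>L2_I2 M Il Ir. \<exists>c::real. AE x in M. g x = c * f x)))
  \<and> ((\<not> (pos_def_mat (moment_matrix M Il) \<and> pos_def_mat (moment_matrix M Ir)) \<and>
      \<not> (emeasure M Il > 0 \<and> emeasure M Ir > 0 \<and>
         ((pos_def_mat (moment_matrix M Il) \<and> det (moment_matrix M Ir) = 0) \<or>
          (pos_def_mat (moment_matrix M Ir) \<and> det (moment_matrix M Il) = 0))))
     \<longrightarrow> (\<forall>f\<in>L2_I2 M Il Ir. AE x in M. f x = 0))"
proof -
  have Mb: "sets M = sets borel" and lf: "\<And>a b. emeasure M {a..b} < \<infinity>"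
    using assms(1) unfolding loc_finite_borel_def by auto
  have sp: "space M = UNIV" using sets_eq_imp_space_eq[OF Mb] by simp
  define lo :: real where "lo = of_int k * 2 powr of_int j"
  define mid :: real where "mid = (of_int k + 1/2) * 2 powr of_int j"
  define hi :: real where "hi = (of_int k + 1) * 2 powr of_int j"
  have Il: "Il = {lo..<mid}" unfolding Il_def dyadic_left_def lo_def mid_def ..
  have Ir: "Ir = {mid..<hi}" unfolding Ir_def dyadic_right_def mid_def hi_def ..
  have sL: "Il \<in> sets M" and sR: "Ir \<in> sets M" unfolding Il Ir using Mb by auto
  have fL: "emeasure M Il < \<infinity>"
  proof -
    have "emeasure M Il \<le> emeasure M {lo..mid}" unfolding Il
      by (rule emeasure_mono) (use Mb in auto)
    then show ?thesis using lf[of lo mid] by (meson order.strict_trans1)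
  qed
  have fR: "emeasure M Ir < \<infinity>"
  proof -
    have "emeasure M Ir \<le> emeasure M {mid..hi}" unfolding Ir
      by (rule emeasure_mono) (use Mb in auto)
    then show ?thesis using lf[of mid hi] by (meson order.strict_trans1)
  qed
  have iL: "\<And>k. integrable M (\<lambda>x. indicator Il x * x^k :: real)"
    by (rule int_J[OF Mb sL fL, of lo mid]) (auto simp: Il)
  have iR: "\<And>k. integrable M (\<lambda>x. indicator Ir x * x^k :: real)"
    by (rule int_J[OF Mb sR fR, of mid hi]) (auto simp: Ir)
  have dj: "Il \<inter> Ir = {}" and dj': "Ir \<inter> Il = {}" unfolding Il Ir by auto
  note P = iL iR dj sp sL sR fL fR
  note P' = iR iL dj' sp sR sL fR fL
  show ?thesis
  proof (intro conjI impI)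
    assume H: "emeasure M Il > 0 \<and> emeasure M Ir > 0 \<and>
      ((pos_def_mat (moment_matrix M Il) \<and> det (moment_matrix M Ir) = 0) \<or>
       (pos_def_mat (moment_matrix M Ir) \<and> det (moment_matrix M Il) = 0))"
    then consider "pos_def_mat (moment_matrix M Il)" "det (moment_matrix M Ir) = 0" "emeasure M Ir > 0"
      | "pos_def_mat (moment_matrix M Ir)" "det (moment_matrix M Il) = 0" "emeasure M Il > 0"
      by blast
    then show "\<exists>f\<in>L2_I2 M Il Ir. \<not> (AE x in M. f x = 0) \<and>
            (\<forall>g\<in>L2_I2 M Il Ir. \<exists>c::real. AE x in M. g x = c * f x)"
    proof cases
      case 1
      then show ?thesis using part1[OF P] by blast
    next
      case 2
      then show ?thesis using part1[OF P'] L2_sym[of M Il Ir] by metis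
    qed
  next
    assume H: "\<not> (pos_def_mat (moment_matrix M Il) \<and> pos_def_mat (moment_matrix M Ir)) \<and>
      \<not> (emeasure M Il > 0 \<and> emeasure M Ir > 0 \<and>
         ((pos_def_mat (moment_matrix M Il) \<and> det (moment_matrix M Ir) = 0) \<or>
          (pos_def_mat (moment_matrix M Ir) \<and> det (moment_matrix M Il) = 0)))"
    show "\<forall>f\<in>L2_I2 M Il Ir. AE x in M. f x = 0"
    proof
      fix f assume f: "f \<in> L2_I2 M Il Ir"
      show "AE x in M. f x = 0"
      proof (cases "emeasure M Il = 0")
        case True
        show ?thesis using zero1[OF P True f] .
      next
        case nL: False
        show ?thesis
        proof (cases "emeasure M Ir = 0")
          case True
          then show ?thesis using zero1[OF P' True] f L2_sym[of M Il Ir] by simp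
        next
          case nR: False
          have pL: "emeasure M Il > 0" using nL by (simp add: zero_less_iff_neq_zero)
          have pR: "emeasure M Ir > 0" using nR by (simp add: zero_less_iff_neq_zero)
          have "det (moment_matrix M Il) = 0" "det (moment_matrix M Ir) = 0"
            using H pL pR pd_iff_det[OF P pL] pd_iff_det[OF P' pR] by auto
          then show ?thesis using zero2[OF P pL pR _ _ f] by simp
        qed
      qed
    qed
  qed
qed

end
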